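(* In the E-phase model, for every formula $A$: (1) for every formula $D$ and every $n\ge 0$ and $T_1,\dots,T_n$ each a closed term or an atom, if $c^D T_1\cdots T_n\in[\![A]\!]$ then $c^D T_1\cdots T_n\in A^*$; and (2) $A^*\subseteq[\![A]\!]$.
   Context: System $\mathbf{IL}_{\mathbf{at}}$: formulas $A ::= X\mid A\to B\mid\forall X.A$ ($X$ atoms); terms $t ::= x\mid c^A\mid\lambda x.t\mid ts\mid\Lambda X.t\mid tX$ (a term-constant $c^A$ for each formula $A$; $tX$ only with $X$ an atom). $\Gamma\vdash t:A$ derivable by: $\Gamma,x:A\vdash x:A$; $\Gamma\vdash c^A:A$; $\to$-introduction and elimination (abstraction, application); $\forall$-introduction $\Gamma\vdash\Lambda X.t:\forall X.A$ from $\Gamma\vdash t:A$ if $X$ is not free in the formulas of $\Gamma$; $\forall$-elimination $\Gamma\vdash tY:A[X:=Y]$ from $\Gamma\vdash t:\forall X.A$ for atoms $Y$. $\beta$-reduction $(\lambda x.t)s\to_\beta t[x:=s]$, $(\Lambda X.t)Y\to_\beta t[X:=Y]$ in any subterm position; normal = no redex; $\twoheadrightarrow$ reflexive-transitive closure. Closed term = no free term-variables. $[\![A]\!]$ = set of closed terms $t$ with $t\twoheadrightarrow s$ for some normal $s$ such that $\vdash s:A$ is derivable. E-phase model: interpretation of formulas as sets of closed terms: $X^*=[\![X]\!]$; $(A\to B)^*=\{t\text{ closed}\mid ts\in B^*\text{ for every }s\in A^*\}$; $(\forall X.A)^*=\{t\text{ closed}\mid tY\in(A[X:=Y])^*\text{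 for every atom }Y\}$. *)

theory Defs
  imports Main
begin

text \<open>Atoms are natural numbers used as de Bruijn indices: an atom index below the
 current binder depth refers to a binder, indices beyond refer to free atoms.
 Formulas and terms are thus taken up to alpha-equivalence.\<close>

datatype fm = At nat | Imp fm fm | All fm

fun liftF :: "nat \<Rightarrow> fm \<Rightarrow> fm" where
  "liftF k (At i) = At (if i < k then i else Suc i)"
| "liftF k (Imp A B) = Imp (liftF k A) (liftF k B)"
| "liftF k (All A) = All (liftF (Suc k) A)"

text \<open>substF k y A replaces atom index k by y (y relative to depth k, so y >= k at
 the intended calls) and decrements indices above k. A[X:=Y] for the body of
 All X.A is substF 0 Y A.\<close>
fun substF :: "nat \<Rightarrow> nat \<Rightarrow> fm \<Rightarrow> fm" where
  "substF k y (At i) = At (if i < k then i else if i = k then y else i - 1)"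
| "substF k y (Imp A B) = Imp (substF k y A) (substF k y B)"
| "substF k y (All A) = All (substF (Suc k) (Suc y) A)"

lemma size_substF[simp]: "size (substF k y A) = size A"
  by (induction A arbitrary: k y) auto

text \<open>Terms: term variables (de Bruijn), constants c^A, lambda, application,
 type abstraction, application to an atom.\<close>
datatype tm = Var nat | Cst fm | Lam tm | App tm tm | TLam tm | TApp tm nat

fun liftV :: "nat \<Rightarrow> tm \<Rightarrow> tm" where
  "liftV k (Var i) = Var (if i < k then i else Suc i)"
| "liftV k (Cst A) = Cst A"
| "liftV k (Lam t) = Lam (liftV (Suc k) t)"
| "liftV k (App t s) = App (liftV k t) (liftV k s)"
| "liftV k (TLam t) = TLam (liftV k t)"
| "liftV k (TApp t Y) = TApp (liftV k t) Y"

fun liftT :: "nat \<Rightarrow> tm \<Rightarrow> tm" where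
  "liftT k (Var i) = Var i"
| "liftT k (Cst A) = Cst (liftF k A)"
| "liftT k (Lam t) = Lam (liftT k t)"
| "liftT k (App t s) = App (liftT k t) (liftT k s)"
| "liftT k (TLam t) = TLam (liftT (Suc k) t)"
| "liftT k (TApp t Y) = TApp (liftT k t) (if Y < k then Y else Suc Y)"

fun substV :: "nat \<Rightarrow> tm \<Rightarrow> tm \<Rightarrow> tm" where
  "substV k s (Var i) = (if i < k then Var i else if i = k then s else Var (i - 1))"
| "substV k s (Cst A) = Cst A"
| "substV k s (Lam t) = Lam (substV (Suc k) (liftV 0 s) t)"
| "substV k s (App t u) = App (substV k s t) (substV k s u)"
| "substV k s (TLam t) = TLam (substV k (liftT 0 s) t)"
| "substV k s (TApp t Y) = TApp (substV k s t) Y"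

fun substT :: "nat \<Rightarrow> nat \<Rightarrow> tm \<Rightarrow> tm" where
  "substT k y (Var i) = Var i"
| "substT k y (Cst A) = Cst (substF k y A)"
| "substT k y (Lam t) = Lam (substT k y t)"
| "substT k y (App t u) = App (substT k y t) (substT k y u)"
| "substT k y (TLam t) = TLam (substT (Suc k) (Suc y) t)"
| "substT k y (TApp t Y) = TApp (substT k y t) (if Y < k then Y else if Y = k then y else Y - 1)"

text \<open>Typing judgement Gamma |- t : A (contexts are de Bruijn lists of formulas).
 The forall-introduction rule lifts the context: this is the eigenvariable
 condition "X not free in Gamma".\<close>
inductive has_type :: "fm list \<Rightarrow> tm \<Rightarrow> fm \<Rightarrow> bool" where
  ty_var: "i < length \<Gamma> \<Longrightarrow> has_type \<Gamma> (Var i) (\<Gamma> ! i)"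
| ty_cst: "has_type \<Gamma> (Cst A) A"
| ty_lam: "has_type (A # \<Gamma>) t B \<Longrightarrow> has_type \<Gamma> (Lam t) (Imp A B)"
| ty_app: "has_type \<Gamma> t (Imp A B) \<Longrightarrow> has_type \<Gamma> s A \<Longrightarrow> has_type \<Gamma> (App t s) B"
| ty_tlam: "has_type (map (liftF 0) \<Gamma>) t A \<Longrightarrow> has_type \<Gamma> (TLam t) (All A)"
| ty_tapp: "has_type \<Gamma> t (All A) \<Longrightarrow> has_type \<Gamma> (TApp t Y) (substF 0 Y A)"

inductive beta :: "tm \<Rightarrow> tm \<Rightarrow> bool" where
  b_lam: "beta (App (Lam t) s) (substV 0 s t)"
| b_tlam: "beta (TApp (TLam t) Y) (substT 0 Y t)"
| c_lam: "beta t t' \<Longrightarrow> beta (Lam t) (Lam t')"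
| c_appl: "beta t t' \<Longrightarrow> beta (App t s) (App t' s)"
| c_appr: "beta s s' \<Longrightarrow> beta (App t s) (App t s')"
| c_tlam: "beta t t' \<Longrightarrow> beta (TLam t) (TLam t')"
| c_tapp: "beta t t' \<Longrightarrow> beta (TApp t Y) (TApp t' Y)"

definition normal :: "tm \<Rightarrow> bool" where
  "normal t \<longleftrightarrow> \<not> (\<exists>u. beta t u)"

abbreviation reds :: "tm \<Rightarrow> tm \<Rightarrow> bool" where
  "reds \<equiv> beta\<^sup>*\<^sup>*"

text \<open>Closed terms: no free term variables (free atoms are allowed).\<close>
fun closedV :: "nat \<Rightarrow> tm \<Rightarrow> bool" where
  "closedV k (Var i) = (i < k)"
| "closedV k (Cst A) = True"
| "closedV k (Lam t) = closedV (Suc k) t"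
| "closedV k (App t s) = (closedV k t \<and> closedV k s)"
| "closedV k (TLam t) = closedV k t"
| "closedV k (TApp t Y) = closedV k t"

definition closed :: "tm \<Rightarrow> bool" where
  "closed t \<longleftrightarrow> closedV 0 t"

definition sem :: "fm \<Rightarrow> tm set" where
  "sem A = {t. closed t \<and> (\<exists>s. reds t s \<and> normal s \<and> has_type [] s A)}"

function star :: "fm \<Rightarrow> tm set" where
  "star (At X) = sem (At X)"
| "star (Imp A B) = {t. closed t \<and> (\<forall>s \<in> star A. App t s \<in> star B)}"
| "star (All A) = {t. closed t \<and> (\<forall>Y. TApp t Y \<in> star (substF 0 Y A))}"
  by pat_completeness auto
termination by (relation "measure size") auto

text \<open>Application of a head term to a list of arguments, each a term (Inl) or an atom (Inr).\<close>
fun apps :: "tm \<Rightarrow> (tm + nat) list \<Rightarrow> tm" where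
  "apps t [] = t"
| "apps t (Inl s # Ts) = apps (App t s) Ts"
| "apps t (Inr Y # Ts) = apps (TApp t Y) Ts"

end

theory Submission imports Defs begin

fun extR :: "(nat \<Rightarrow> nat) \<Rightarrow> nat \<Rightarrow> nat" where
  "extR r 0 = 0" | "extR r (Suc i) = Suc (r i)"

fun renF :: "(nat \<Rightarrow> nat) \<Rightarrow> fm \<Rightarrow> fm" where
  "renF r (At i) = At (r i)"
| "renF r (Imp A B) = Imp (renF r A) (renF r B)"
| "renF r (All A) = All (renF (extR r) A)"

fun renT :: "(nat \<Rightarrow> nat) \<Rightarrow> tm \<Rightarrow> tm" where
  "renT r (Var i) = Var i"
| "renT r (Cst A) = Cst (renF r A)"
| "renT r (Lam t) = Lam (renT r t)"
| "renT r (App t s) = App (renT r t) (renT r s)"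
| "renT r (TLam t) = TLam (renT (extR r) t)"
| "renT r (TApp t Y) = TApp (renT r t) (r Y)"

fun freeF :: "fm \<Rightarrow> nat \<Rightarrow> bool" where
  "freeF (At j) i = (i = j)"
| "freeF (Imp A B) i = (freeF A i \<or> freeF B i)"
| "freeF (All A) i = freeF A (Suc i)"

fun freeT :: "tm \<Rightarrow> nat \<Rightarrow> bool" where
  "freeT (Var j) i = False"
| "freeT (Cst A) i = freeF A i"
| "freeT (Lam t) i = freeT t i"
| "freeT (App t s) i = (freeT t i \<or> freeT s i)"
| "freeT (TLam t) i = freeT t (Suc i)"
| "freeT (TApp t Y) i = (freeT t i \<or> i = Y)"

fun bF :: "fm \<Rightarrow> nat" where
  "bF (At j) = Suc j"
| "bF (Imp A B) = max (bF A) (bF B)"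
| "bF (All A) = bF A"

fun bT :: "tm \<Rightarrow> nat" where
  "bT (Var j) = 0"
| "bT (Cst A) = bF A"
| "bT (Lam t) = bT t"
| "bT (App t s) = max (bT t) (bT s)"
| "bT (TLam t) = bT t"
| "bT (TApp t Y) = max (bT t) (Suc Y)"

lemma bF_free: "freeF A i \<Longrightarrow> i < bF A"
  by (induction A arbitrary: i) fastforce+

lemma bT_free: "freeT t i \<Longrightarrow> i < bT t"
  by (induction t arbitrary: i) (fastforce dest: bF_free)+

definition lk :: "nat \<Rightarrow> nat \<Rightarrow> nat" where "lk k i = (if i < k then i else Suc i)"
definition sk :: "nat \<Rightarrow> nat \<Rightarrow> nat \<Rightarrow> nat" where
  "sk k y i = (if i < k then i else if i = k then y else i - 1)"

lemma extR_lk: "extR (lk k) = lk (Suc k)"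
  by (rule ext, case_tac x) (auto simp: lk_def)
lemma extR_sk: "extR (sk k y) = sk (Suc k) (Suc y)"
  by (rule ext, case_tac x) (auto simp: sk_def)
lemma extR_comp: "extR r \<circ> extR s = extR (r \<circ> s)"
  by (rule ext, case_tac x) auto

lemma liftF_ren: "liftF k A = renF (lk k) A"
  by (induction A arbitrary: k) (auto simp: lk_def extR_lk)
lemma substF_ren: "substF k y A = renF (sk k y) A"
  by (induction A arbitrary: k y) (auto simp: sk_def extR_sk)
lemma liftT_ren: "liftT k t = renT (lk k) t"
  by (induction t arbitrary: k) (auto simp: lk_def extR_lk liftF_ren)
lemma substT_ren: "substT k y t = renT (sk k y) t"
  by (induction t arbitrary: k y) (auto simp: sk_def extR_sk substF_ren)

lemma renF_comp[simp]: "renF r (renF s A) = renF (r \<circ> s) A"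
  by (induction A arbitrary: r s) (auto simp: extR_comp)
lemma renT_comp[simp]: "renT r (renT s t) = renT (r \<circ> s) t"
  by (induction t arbitrary: r s) (auto simp: extR_comp)

lemma renF_cong: "(\<And>i. freeF A i \<Longrightarrow> r i = s i) \<Longrightarrow> renF r A = renF s A"
proof (induction A arbitrary: r s)
  case (At j)
  then show ?case by simp
next
  case (Imp A B)
  have "renF r A = renF s A" by (rule Imp.IH(1)) (simp add: Imp.prems)
  moreover have "renF r B = renF s B" by (rule Imp.IH(2)) (simp add: Imp.prems)
  ultimately show ?case by simp
next
  case (All A)
  have "\<And>i. freeF A i \<Longrightarrow> extR r i = extR s i"
    using All.prems by (case_tac i) auto
  then have "renF (extR r) A = renF (extR s) A" by (rule All.IH)
  then show ?case by simp
qed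

lemma renT_cong: "(\<And>i. freeT t i \<Longrightarrow> r i = s i) \<Longrightarrow> renT r t = renT s t"
proof (induction t arbitrary: r s)
  case (Var j)
  then show ?case by simp
next
  case (Cst A)
  then show ?case using renF_cong[of A r s] by simp
next
  case (Lam t)
  have "renT r t = renT s t" by (rule Lam.IH) (simp add: Lam.prems)
  then show ?case by simp
next
  case (App t u)
  have "renT r t = renT s t" by (rule App.IH(1)) (simp add: App.prems)
  moreover have "renT r u = renT s u" by (rule App.IH(2)) (simp add: App.prems)
  ultimately show ?case by simp
next
  case (TLam t)
  have "\<And>i. freeT t i \<Longrightarrow> extR r i = extR s i"
    using TLam.prems by (case_tac i) auto
  then have "renT (extR r) t = renT (extR s) t" by (rule TLam.IH)
  then show ?case by simp
next
  case (TApp t Y)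
  have "renT r t = renT s t" by (rule TApp.IH) (simp add: TApp.prems)
  then show ?case using TApp.prems by simp
qed

lemma extR_id: "extR (\<lambda>a. a) = (\<lambda>a. a)"
proof
  fix i show "extR (\<lambda>a. a) i = i" by (cases i) auto
qed
lemma renF_id0: "renF (\<lambda>a. a) A = A"
  by (induction A) (auto simp: extR_id)
lemma renT_id0: "renT (\<lambda>a. a) t = t"
  by (induction t) (auto simp: extR_id renF_id0)
lemma renF_id[simp]: "renF id A = A" using renF_id0 by (simp add: id_def)
lemma renT_id[simp]: "renT id t = t" using renT_id0 by (simp add: id_def)

lemma freeF_ren: "freeF (renF r A) i \<Longrightarrow> \<exists>j. freeF A j \<and> r j = i"
proof (induction A arbitrary: r i)
  case (All A)
  then obtain j where "freeF A j" "extR r j = Suc i" by auto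
  then show ?case by (cases j) auto
qed fastforce+

lemma freeT_ren: "freeT (renT r t) i \<Longrightarrow> \<exists>j. freeT t j \<and> r j = i"
proof (induction t arbitrary: r i)
  case (TLam t)
  then obtain j where "freeT t j" "extR r j = Suc i" by auto
  then show ?case by (cases j) auto
qed (fastforce dest: freeF_ren)+

lemma extR_lk0: "extR r \<circ> lk 0 = lk 0 \<circ> r"
  by (rule ext) (simp add: lk_def)
lemma sk_lk0: "sk 0 Y \<circ> lk 0 = id"
  by (rule ext) (simp add: lk_def sk_def)
lemma sk_extR: "sk 0 (r Y) \<circ> extR r = r \<circ> sk 0 Y"
  by (rule ext, case_tac x) (auto simp: sk_def)

lemma renT_liftV[simp]: "renT r (liftV j s) = liftV j (renT r s)"
  by (induction s arbitrary: r j) auto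

lemma renT_liftT0: "renT (extR r) (liftT 0 s) = liftT 0 (renT r s)"
  by (simp add: liftT_ren extR_lk0)

lemma renT_substV: "renT r (substV k s t) = substV k (renT r s) (renT r t)"
  by (induction t arbitrary: r k s) (auto simp: renT_liftT0)

lemma substV_liftV: "j \<le> k \<Longrightarrow> substV (Suc k) (Cst C) (liftV j s) = liftV j (substV k (Cst C) s)"
  by (induction s arbitrary: j k C) auto

lemma substV_liftT0: "substV k (Cst (liftF 0 C)) (liftT 0 s) = liftT 0 (substV k (Cst C) s)"
  by (simp add: liftT_ren liftF_ren renT_substV)

lemma substV_substV: "j \<le> k \<Longrightarrow>
  substV k (Cst C) (substV j s t) = substV j (substV k (Cst C) s) (substV (Suc k) (Cst C) t)"
  by (induction t arbitrary: j k s C) (auto simp: substV_liftV substV_liftT0)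

inductive_cases bVar: "beta (Var i) u"
inductive_cases bCst: "beta (Cst A) u"
inductive_cases bLam: "beta (Lam t) u"
inductive_cases bApp: "beta (App t s) u"
inductive_cases bTLam: "beta (TLam t) u"
inductive_cases bTApp: "beta (TApp t Y) u"

lemma bApp': "beta (App t s) u \<Longrightarrow> (\<exists>b. t = Lam b \<and> u = substV 0 s b) \<or> (\<exists>t'. u = App t' s \<and> beta t t') \<or> (\<exists>s'. u = App t s' \<and> beta s s')"
  by (auto elim: bApp)
lemma bTApp': "beta (TApp t Y) u \<Longrightarrow> (\<exists>b. t = TLam b \<and> u = substT 0 Y b) \<or> (\<exists>t'. u = TApp t' Y \<and> beta t t')"
  by (auto elim: bTApp)

lemma beta_renT: "beta t u \<Longrightarrow> beta (renT r t) (renT r u)"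
proof (induction arbitrary: r rule: beta.induct)
  case (b_lam t s)
  then show ?case by (simp add: renT_substV beta.b_lam)
next
  case (b_tlam t Y)
  have "beta (TApp (TLam (renT (extR r) t)) (r Y)) (substT 0 (r Y) (renT (extR r) t))"
    by (rule beta.b_tlam)
  moreover have "substT 0 (r Y) (renT (extR r) t) = renT r (substT 0 Y t)"
    by (simp add: substT_ren sk_extR)
  ultimately show ?case by simp
qed (auto intro: beta.intros)

lemma beta_renT_back: "beta (renT r m) v \<Longrightarrow> \<exists>m'. beta m m' \<and> v = renT r m'"
proof (induction m arbitrary: r v)
  case (Var x)
  then show ?case by (auto elim: bVar)
next
  case (Cst x)
  then show ?case by (auto elim: bCst)
next
  case (Lam m)
  from Lam.prems obtain t' where "v = Lam t'" "beta (renT r m) t'" by (auto elim: bLam)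
  with Lam.IH obtain m' where "beta m m'" "t' = renT r m'" by blast
  then show ?case using \<open>v = Lam t'\<close> by (auto intro: beta.c_lam)
next
  case (App m1 m2)
  from bApp'[OF App.prems[simplified]] show ?case
  proof (elim disjE exE conjE)
    fix t assume 1: "renT r m1 = Lam t" "v = substV 0 (renT r m2) t"
    then obtain t0 where m1: "m1 = Lam t0" "t = renT r t0" by (cases m1) auto
    then show ?thesis using 1 by (auto simp: renT_substV intro!: beta.b_lam)
  next
    fix t' assume 2: "v = App t' (renT r m2)" "beta (renT r m1) t'"
    then show ?thesis using App.IH(1) by (metis beta.c_appl renT.simps(4))
  next
    fix t' assume 3: "v = App (renT r m1) t'" "beta (renT r m2) t'"
    then show ?thesis using App.IH(2) by (metis beta.c_appr renT.simps(4))
  qed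
next
  case (TLam m)
  from TLam.prems obtain t' where "v = TLam t'" "beta (renT (extR r) m) t'" by (auto elim: bTLam)
  with TLam.IH obtain m' where "beta m m'" "t' = renT (extR r) m'" by blast
  then show ?case using \<open>v = TLam t'\<close> by (auto intro: beta.c_tlam)
next
  case (TApp m1 Y)
  from bTApp'[OF TApp.prems[simplified]] show ?case
  proof (elim disjE exE conjE)
    fix t assume 1: "renT r m1 = TLam t" "v = substT 0 (r Y) t"
    then obtain t0 where m1: "m1 = TLam t0" "t = renT (extR r) t0" by (cases m1) auto
    have "substT 0 (r Y) (renT (extR r) t0) = renT r (substT 0 Y t0)"
      by (simp add: substT_ren sk_extR)
    then show ?thesis using 1 m1 by (auto intro!: beta.b_tlam)
  next
    fix t' assume 2: "v = TApp t' (r Y)" "beta (renT r m1) t'"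
    then show ?thesis using TApp.IH by (metis beta.c_tapp renT.simps(6))
  qed
qed

lemma beta_substC: "beta t u \<Longrightarrow> beta (substV k (Cst C) t) (substV k (Cst C) u)"
proof (induction arbitrary: k C rule: beta.induct)
  case (b_lam t s)
  then show ?case by (simp add: substV_substV beta.b_lam)
next
  case (b_tlam t Y)
  have "beta (TApp (TLam (substV k (Cst (liftF 0 C)) t)) Y) (substT 0 Y (substV k (Cst (liftF 0 C)) t))"
    by (rule beta.b_tlam)
  moreover have "substT 0 Y (substV k (Cst (liftF 0 C)) t) = substV k (Cst C) (substT 0 Y t)"
    by (simp add: substT_ren renT_substV liftF_ren sk_lk0)
  ultimately show ?case by simp
qed (auto intro: beta.intros)

lemma beta_substC_back: "beta (substV k (Cst C) m) v \<Longrightarrow> \<exists>m'. beta m m' \<and> v = substV k (Cst C) m'"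
proof (induction m arbitrary: k C v)
  case (Var x)
  then show ?case by (auto elim: bVar bCst split: if_splits)
next
  case (Cst x)
  then show ?case by (auto elim: bCst)
next
  case (Lam m)
  from Lam.prems obtain t' where "v = Lam t'" "beta (substV (Suc k) (Cst C) m) t'" by (auto elim: bLam)
  with Lam.IH obtain m' where "beta m m'" "t' = substV (Suc k) (Cst C) m'" by blast
  then show ?case using \<open>v = Lam t'\<close> by (auto intro: beta.c_lam)
next
  case (App m1 m2)
  from bApp'[OF App.prems[simplified]] show ?case
  proof (elim disjE exE conjE)
    fix t assume 1: "substV k (Cst C) m1 = Lam t" "v = substV 0 (substV k (Cst C) m2) t"
    then obtain t0 where m1: "m1 = Lam t0" "t = substV (Suc k) (Cst C) t0"
      by (cases m1) (auto split: if_splits)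
    then show ?thesis using 1 by (auto simp: substV_substV intro!: beta.b_lam)
  next
    fix t' assume 2: "v = App t' (substV k (Cst C) m2)" "beta (substV k (Cst C) m1) t'"
    then show ?thesis using App.IH(1) by (metis beta.c_appl substV.simps(4))
  next
    fix t' assume 3: "v = App (substV k (Cst C) m1) t'" "beta (substV k (Cst C) m2) t'"
    then show ?thesis using App.IH(2) by (metis beta.c_appr substV.simps(4))
  qed
next
  case (TLam m)
  from TLam.prems obtain t' where "v = TLam t'" "beta (substV k (Cst (liftF 0 C)) m) t'" by (auto elim: bTLam)
  with TLam.IH obtain m' where "beta m m'" "t' = substV k (Cst (liftF 0 C)) m'" by blast
  then show ?case using \<open>v = TLam t'\<close> by (auto intro: beta.c_tlam)
next
  case (TApp m1 Y)
  from bTApp'[OF TApp.prems[simplified]] show ?case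
  proof (elim disjE exE conjE)
    fix t assume 1: "substV k (Cst C) m1 = TLam t" "v = substT 0 Y t"
    then obtain t0 where m1: "m1 = TLam t0" "t = substV k (Cst (liftF 0 C)) t0"
      by (cases m1) (auto split: if_splits)
    have "substT 0 Y (substV k (Cst (liftF 0 C)) t0) = substV k (Cst C) (substT 0 Y t0)"
      by (simp add: substT_ren renT_substV liftF_ren sk_lk0)
    then show ?thesis using 1 m1 by (auto intro!: beta.b_tlam)
  next
    fix t' assume 2: "v = TApp t' Y" "beta (substV k (Cst C) m1) t'"
    then show ?thesis using TApp.IH by (metis beta.c_tapp substV.simps(6))
  qed
qed


lemma reds_App1: "reds t t' \<Longrightarrow> reds (App t s) (App t' s)"
  by (induction rule: rtranclp_induct) (auto intro: rtranclp.rtrancl_into_rtrancl beta.c_appl)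
lemma reds_App2: "reds s s' \<Longrightarrow> reds (App t s) (App t s')"
  by (induction rule: rtranclp_induct) (auto intro: rtranclp.rtrancl_into_rtrancl beta.c_appr)
lemma reds_Lam: "reds t t' \<Longrightarrow> reds (Lam t) (Lam t')"
  by (induction rule: rtranclp_induct) (auto intro: rtranclp.rtrancl_into_rtrancl beta.c_lam)
lemma reds_TLam: "reds t t' \<Longrightarrow> reds (TLam t) (TLam t')"
  by (induction rule: rtranclp_induct) (auto intro: rtranclp.rtrancl_into_rtrancl beta.c_tlam)
lemma reds_TApp: "reds t t' \<Longrightarrow> reds (TApp t Y) (TApp t' Y)"
  by (induction rule: rtranclp_induct) (auto intro: rtranclp.rtrancl_into_rtrancl beta.c_tapp)

lemma reds_renT_back: "reds (renT r m) u \<Longrightarrow> \<exists>m'. reds m m' \<and> u = renT r m'"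
proof (induction rule: rtranclp_induct)
  case base
  then show ?case by auto
next
  case (step y z)
  then obtain m' where "reds m m'" "y = renT r m'" by auto
  with step(2) obtain m'' where "beta m' m''" "z = renT r m''" using beta_renT_back by blast
  then show ?case using \<open>reds m m'\<close> by (auto intro: rtranclp.rtrancl_into_rtrancl)
qed

lemma reds_substC_back: "reds (substV k (Cst C) m) u \<Longrightarrow> \<exists>m'. reds m m' \<and> u = substV k (Cst C) m'"
proof (induction rule: rtranclp_induct)
  case base
  then show ?case by auto
next
  case (step y z)
  then obtain m' where "reds m m'" "y = substV k (Cst C) m'" by auto
  with step(2) obtain m'' where "beta m' m''" "z = substV k (Cst C) m''" using beta_substC_back by blast
  then show ?case using \<open>reds m m'\<close> by (auto intro: rtranclp.rtrancl_into_rtrancl)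
qed

lemma normal_renT: "normal (renT r m) \<Longrightarrow> normal m"
  unfolding normal_def using beta_renT by blast
lemma normal_substC: "normal (substV k (Cst C) m) \<Longrightarrow> normal m"
  unfolding normal_def using beta_substC by blast

lemma freeT_liftV[simp]: "freeT (liftV j s) i = freeT s i"
  by (induction s arbitrary: j i) auto

lemma freeT_substV: "freeT (substV k s t) i \<Longrightarrow> freeT s i \<or> freeT t i"
proof (induction t arbitrary: k s i)
  case (TLam t)
  then have "freeT (liftT 0 s) (Suc i) \<or> freeT t (Suc i)" by auto
  then show ?case
  proof
    assume "freeT (liftT 0 s) (Suc i)"
    then obtain j where "freeT s j" "lk 0 j = Suc i" using freeT_ren liftT_ren by metis
    then show ?case by (simp add: lk_def)
  qed simp
next
  case (Lam t)
  then show ?case by (metis freeT.simps(3) freeT_liftV substV.simps(3))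
next
  case (App t1 t2)
  then show ?case by (metis freeT.simps(4) substV.simps(4))
qed (auto split: if_splits)

lemma freeT_beta: "beta t u \<Longrightarrow> freeT u i \<Longrightarrow> freeT t i"
proof (induction arbitrary: i rule: beta.induct)
  case (b_lam t s)
  then show ?case using freeT_substV by fastforce
next
  case (b_tlam t Y)
  then obtain j where "freeT t j" "sk 0 Y j = i" using freeT_ren substT_ren by metis
  then show ?case by (cases j) (auto simp: sk_def)
qed auto

lemma freeT_reds: "reds t u \<Longrightarrow> freeT u i \<Longrightarrow> freeT t i"
  by (induction rule: rtranclp_induct) (auto dest: freeT_beta)

lemma reds_Cst: "reds (Cst A) u \<Longrightarrow> u = Cst A"
  by (induction rule: rtranclp_induct) (auto elim: bCst)

lemma reds_App_dec: "reds x u \<Longrightarrow> x = App t s \<Longrightarrow>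
  (\<exists>t' s'. reds t t' \<and> reds s s' \<and> u = App t' s') \<or>
  (\<exists>m s'. reds t (Lam m) \<and> reds s s' \<and> reds (substV 0 s' m) u)"
proof (induction arbitrary: t s rule: converse_rtranclp_induct)
  case base
  then show ?case by auto
next
  case (step x y)
  from bApp'[OF step(1)[unfolded step(4)]] show ?case
  proof (elim disjE exE conjE)
    fix b assume "t = Lam b" "y = substV 0 s b"
    then show ?thesis using step(2) by blast
  next
    fix t' assume "y = App t' s" "beta t t'"
    then show ?thesis using step(3)[of t' s]
      by (meson converse_rtranclp_into_rtranclp)
  next
    fix s' assume "y = App t s'" "beta s s'"
    then show ?thesis using step(3)[of t s']
      by (meson converse_rtranclp_into_rtranclp)
  qed
qed

lemma reds_TApp_dec: "reds x u \<Longrightarrow> x = TApp t Y \<Longrightarrow>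
  (\<exists>t'. reds t t' \<and> u = TApp t' Y) \<or>
  (\<exists>m. reds t (TLam m) \<and> reds (substT 0 Y m) u)"
proof (induction arbitrary: t rule: converse_rtranclp_induct)
  case base
  then show ?case by auto
next
  case (step x y)
  from bTApp'[OF step(1)[unfolded step(4)]] show ?case
  proof (elim disjE exE conjE)
    fix b assume "t = TLam b" "y = substT 0 Y b"
    then show ?thesis using step(2) by blast
  next
    fix t' assume "y = TApp t' Y" "beta t t'"
    then show ?thesis using step(3)[of t']
      by (meson converse_rtranclp_into_rtranclp)
  qed
qed

inductive_cases tVar: "has_type G (Var i) B"
inductive_cases tCst: "has_type G (Cst A) B"
inductive_cases tLam: "has_type G (Lam t) B"
inductive_cases tApp: "has_type G (App t s) B"
inductive_cases tTLam: "has_type G (TLam t) B"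
inductive_cases tTApp: "has_type G (TApp t Y) B"

lemma renF_substF0: "renF r (substF 0 Y A) = substF 0 (r Y) (renF (extR r) A)"
  by (simp add: substF_ren sk_extR)

lemma has_type_ren: "has_type G t A \<Longrightarrow> has_type (map (renF r) G) (renT r t) (renF r A)"
proof (induction arbitrary: r rule: has_type.induct)
  case (ty_var i G)
  then show ?case using has_type.ty_var[of i "map (renF r) G"] by simp
next
  case (ty_tlam G t A)
  have "map (renF (extR r)) (map (liftF 0) G) = map (liftF 0) (map (renF r) G)"
    by (simp add: liftF_ren extR_lk0)
  then have "has_type (map (liftF 0) (map (renF r) G)) (renT (extR r) t) (renF (extR r) A)"
    using ty_tlam.IH[of "extR r"] by metis
  then show ?case by (simp add: has_type.ty_tlam)
next
  case (ty_tapp G t A Y)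
  then show ?case by (auto simp: renF_substF0 intro: has_type.ty_tapp)
qed (auto intro: has_type.intros)

lemma has_type_desubst: "has_type G (substV k (Cst C) t) B \<Longrightarrow> k \<le> length G \<Longrightarrow>
   has_type (take k G @ C # drop k G) t B"
proof (induction t arbitrary: G k C B)
  case (Var i)
  let ?L = "take k G @ C # drop k G"
  have lenL: "length ?L = Suc (length G)" using Var.prems(2) by simp
  show ?case
  proof (cases "i < k")
    case True
    then have "has_type G (Var i) B" using Var by simp
    then have B: "B = G ! i" and il: "i < length G" by (auto elim: tVar)
    have "?L ! i = G ! i" using True Var.prems(2) by (simp add: nth_append)
    moreover have "i < length ?L" using il lenL by simp
    ultimately show ?thesis using B has_type.ty_var[of i ?L] by simp
  next
    case False
    show ?thesis
    proof (cases "i = k")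
      case True
      then have "B = C" using Var by (auto elim: tCst)
      moreover have "?L ! k = C" using Var.prems(2) by (simp add: nth_append)
      moreover have "k < length ?L" using lenL Var.prems(2) by simp
      ultimately show ?thesis using True has_type.ty_var[of k ?L] by simp
    next
      case False2: False
      define j where "j = i - k - 1"
      have ij: "i = Suc (k + j)" using False False2 unfolding j_def by arith
      have "has_type G (Var (k + j)) B" using Var.prems(1) ij by simp
      then have B: "B = G ! (k + j)" and il: "k + j < length G" by (auto elim: tVar)
      have "?L ! i = G ! (k + j)" using ij Var.prems(2) by (simp add: nth_append)
      moreover have "i < length ?L" using il lenL ij by simp
      ultimately show ?thesis using B has_type.ty_var[of i ?L] by simp
    qed
  qed
next
  case (Cst x)
  then show ?case by (auto elim!: tCst intro: has_type.intros)
next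
  case (Lam t)
  from Lam.prems obtain A B' where "B = Imp A B'" "has_type (A # G) (substV (Suc k) (Cst C) t) B'"
    by (auto elim: tLam)
  with Lam.IH[of "A # G" "Suc k" C B'] Lam.prems show ?case by (auto intro: has_type.ty_lam)
next
  case (App t1 t2)
  from App.prems obtain A where h1: "has_type G (substV k (Cst C) t1) (Imp A B)"
    and h2: "has_type G (substV k (Cst C) t2) A"
    by (auto elim: tApp)
  have "has_type (take k G @ C # drop k G) t1 (Imp A B)" using App.IH(1)[OF h1 App.prems(2)] .
  moreover have "has_type (take k G @ C # drop k G) t2 A" using App.IH(2)[OF h2 App.prems(2)] .
  ultimately show ?case by (rule has_type.ty_app)
next
  case (TLam t)
  from TLam.prems obtain B' where "B = All B'" "has_type (map (liftF 0) G) (substV k (Cst (liftF 0 C)) t) B'"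
    by (auto elim: tTLam)
  with TLam.IH[of "map (liftF 0) G" k "liftF 0 C" B'] TLam.prems show ?case
    by (auto intro: has_type.ty_tlam simp: take_map drop_map)
next
  case (TApp t Y)
  from TApp.prems obtain A where "B = substF 0 Y A" "has_type G (substV k (Cst C) t) (All A)"
    by (auto elim: tTApp)
  with TApp.IH TApp.prems show ?case by (auto intro: has_type.ty_tapp)
qed


inductive hd_c :: "tm \<Rightarrow> bool" where
  hc_cst: "hd_c (Cst D)"
| hc_app: "hd_c t \<Longrightarrow> hd_c (App t s)"
| hc_tapp: "hd_c t \<Longrightarrow> hd_c (TApp t Y)"

inductive_cases hLam: "hd_c (Lam t)"
inductive_cases hTLam: "hd_c (TLam t)"
inductive_cases hApp: "hd_c (App t s)"
inductive_cases hTApp: "hd_c (TApp t Y)"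

lemma hd_c_beta: "beta t u \<Longrightarrow> hd_c t \<Longrightarrow> hd_c u"
  by (induction rule: beta.induct) (auto elim: hLam hTLam hApp hTApp intro: hd_c.intros)

lemma hd_c_reds: "reds t u \<Longrightarrow> hd_c t \<Longrightarrow> hd_c u"
  by (induction rule: rtranclp_induct) (auto dest: hd_c_beta)

lemma hd_c_apps: "hd_c t \<Longrightarrow> hd_c (apps t Ts)"
  by (induction t Ts rule: apps.induct) (auto intro: hd_c.intros)

lemma normal_App_hd: "hd_c n \<Longrightarrow> normal n \<Longrightarrow> normal s \<Longrightarrow> normal (App n s)"
  unfolding normal_def using bApp' hLam by metis
lemma normal_TApp_hd: "hd_c n \<Longrightarrow> normal n \<Longrightarrow> normal (TApp n Y)"
  unfolding normal_def using bTApp' hTLam by metis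
lemma normal_Cst: "normal (Cst D)"
  unfolding normal_def by (auto elim: bCst)
lemma normal_Lam: "normal m \<Longrightarrow> normal (Lam m)"
  unfolding normal_def by (auto elim: bLam)
lemma normal_TLam: "normal m \<Longrightarrow> normal (TLam m)"
  unfolding normal_def by (auto elim: bTLam)
lemma normal_App1: "normal (App t s) \<Longrightarrow> normal t"
  unfolding normal_def by (auto intro: beta.c_appl)
lemma normal_TApp1: "normal (TApp t Y) \<Longrightarrow> normal t"
  unfolding normal_def by (auto intro: beta.c_tapp)

lemma neutral: "has_type [] t B \<Longrightarrow> normal t \<Longrightarrow> (\<forall>m. t \<noteq> Lam m) \<Longrightarrow> (\<forall>m. t \<noteq> TLam m) \<Longrightarrow> hd_c t"
proof (induction t arbitrary: B)
  case (Var x)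
  then show ?case by (auto elim: tVar)
next
  case (Cst x)
  then show ?case by (auto intro: hd_c.intros)
next
  case (App t1 t2)
  from App.prems(1) obtain A where ht: "has_type [] t1 (Imp A B)" by (auto elim: tApp)
  have n1: "normal t1" using App.prems(2) by (rule normal_App1)
  have "\<forall>m. t1 \<noteq> Lam m" using App.prems(2) unfolding normal_def by (auto intro: beta.b_lam)
  moreover have "\<forall>m. t1 \<noteq> TLam m" using ht by (auto elim: tTLam)
  ultimately show ?case using App.IH(1)[OF ht n1] by (auto intro: hd_c.intros)
next
  case (TApp t1 Y)
  from TApp.prems(1) obtain A where ht: "has_type [] t1 (All A)" by (auto elim: tTApp)
  have n1: "normal t1" using TApp.prems(2) by (rule normal_TApp1)
  have "\<forall>m. t1 \<noteq> TLam m" using TApp.prems(2) unfolding normal_def by (auto intro: beta.b_tlam)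
  moreover have "\<forall>m. t1 \<noteq> Lam m" using ht by (auto elim: tLam)
  ultimately show ?case using TApp.IH[OF ht n1] by (auto intro: hd_c.intros)
qed auto

lemma hd_c_free: "hd_c t \<Longrightarrow> has_type G t B \<Longrightarrow> freeF B i \<Longrightarrow> freeT t i"
proof (induction arbitrary: B i rule: hd_c.induct)
  case (hc_cst D)
  then show ?case by (auto elim: tCst)
next
  case (hc_app t s)
  then show ?case by (fastforce elim: tApp)
next
  case (hc_tapp t Y)
  from hc_tapp.prems(1) obtain A where "B = substF 0 Y A" "has_type G t (All A)" by (auto elim: tTApp)
  moreover from this hc_tapp.prems(2) obtain j where "freeF A j" "sk 0 Y j = i"
    using freeF_ren substF_ren by metis
  ultimately show ?case using hc_tapp.IH by (cases j) (auto simp: sk_def)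
qed

lemma apps_snoc1: "apps t (Ts @ [Inl s]) = App (apps t Ts) s"
  by (induction t Ts rule: apps.induct) auto
lemma apps_snoc2: "apps t (Ts @ [Inr Y]) = TApp (apps t Ts) Y"
  by (induction t Ts rule: apps.induct) auto

lemma star_closed: "t \<in> star A \<Longrightarrow> closed t"
  by (cases A) (auto simp: sem_def)

lemma unsubstF: "\<not> freeF A (Suc Y) \<Longrightarrow> renF (\<lambda>i. if i = Y then 0 else Suc i) (substF 0 Y A) = A"
proof -
  assume nf: "\<not> freeF A (Suc Y)"
  have "renF ((\<lambda>i. if i = Y then 0 else Suc i) \<circ> sk 0 Y) A = renF id A"
    by (rule renF_cong) (use nf in \<open>auto simp: sk_def split: nat.splits\<close>)
  then show ?thesis by (simp add: substF_ren)
qed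

lemma unsubstT: "\<not> freeT m (Suc Y) \<Longrightarrow> renT (\<lambda>i. if i = Y then 0 else Suc i) (substT 0 Y m) = m"
proof -
  assume nf: "\<not> freeT m (Suc Y)"
  have "renT ((\<lambda>i. if i = Y then 0 else Suc i) \<circ> sk 0 Y) m = renT id m"
    by (rule renT_cong) (use nf in \<open>auto simp: sk_def split: nat.splits\<close>)
  then show ?thesis by (simp add: substT_ren)
qed


theorem mainTheorem7:
  fixes A :: fm
  shows "(\<forall>D Ts. (\<forall>T \<in> set Ts. case T of Inl t \<Rightarrow> closed t | Inr Y \<Rightarrow> True)
            \<longrightarrow> apps (Cst D) Ts \<in> sem A \<longrightarrow> apps (Cst D) Ts \<in> star A)
         \<and> star A \<subseteq> sem A"
proof (induction "size A" arbitrary: A rule: less_induct)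
  case less
  have IH1: "\<And>A' D Ts. size A' < size A \<Longrightarrow> (\<forall>T \<in> set Ts. case T of Inl t \<Rightarrow> closed t | Inr Y \<Rightarrow> True)
     \<Longrightarrow> apps (Cst D) Ts \<in> sem A' \<Longrightarrow> apps (Cst D) Ts \<in> star A'"
    using less by blast
  have IH2: "\<And>A' t. size A' < size A \<Longrightarrow> t \<in> star A' \<Longrightarrow> t \<in> sem A'"
    using less by blast
  show ?case
  proof (cases A)
    case (At X)
    then show ?thesis by simp
  next
    case (Imp A1 B1)
    have P1: "apps (Cst D) Ts \<in> star A"
      if ok: "\<forall>T \<in> set Ts. case T of Inl t \<Rightarrow> closed t | Inr Y \<Rightarrow> True"
        and h: "apps (Cst D) Ts \<in> sem A" for D Ts
    proof -
      from h Imp obtain n where cl: "closed (apps (Cst D) Ts)" and r: "reds (apps (Cst D) Ts) n"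
        and nn: "normal n" and ty: "has_type [] n (Imp A1 B1)" by (auto simp: sem_def)
      have hn: "hd_c n" using hd_c_reds[OF r hd_c_apps[OF hd_c.hc_cst]] .
      have "App (apps (Cst D) Ts) s \<in> star B1" if s: "s \<in> star A1" for s
      proof -
        have "s \<in> sem A1" using IH2[OF _ s] Imp by simp
        then obtain s' where cs: "closed s" and rs: "reds s s'" and ns: "normal s'"
          and ts: "has_type [] s' A1" by (auto simp: sem_def)
        have "apps (Cst D) (Ts @ [Inl s]) \<in> sem B1"
          unfolding apps_snoc1 sem_def
        proof (intro CollectI conjI exI)
          show "closed (App (apps (Cst D) Ts) s)" using cl cs by (simp add: closed_def)
          show "reds (App (apps (Cst D) Ts) s) (App n s')"
            using reds_App1[OF r] reds_App2[OF rs] by (meson rtranclp_trans)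
          show "normal (App n s')" using normal_App_hd[OF hn nn ns] .
          show "has_type [] (App n s') B1" using ty ts by (rule has_type.ty_app)
        qed
        moreover have "\<forall>T \<in> set (Ts @ [Inl s]). case T of Inl t \<Rightarrow> closed t | Inr Y \<Rightarrow> True"
          using ok cs by auto
        ultimately have "apps (Cst D) (Ts @ [Inl s]) \<in> star B1" using IH1[of B1] Imp by simp
        then show ?thesis by (simp add: apps_snoc1)
      qed
      then show ?thesis using cl Imp by simp
    qed
    have P2: "t \<in> sem A" if t: "t \<in> star A" for t
    proof -
      from t Imp have ct: "closed t" and ht: "\<forall>s \<in> star A1. App t s \<in> star B1" by auto
      have "Cst A1 \<in> sem A1"
        unfolding sem_def by (auto simp: closed_def normal_Cst intro: has_type.ty_cst)
      then have "apps (Cst A1) [] \<in> star A1" using IH1[of A1 "[]" A1] Imp by simp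
      then have "App t (Cst A1) \<in> star B1" using ht by simp
      then have "App t (Cst A1) \<in> sem B1" using IH2 Imp by simp
      then obtain u where ru: "reds (App t (Cst A1)) u" and nu: "normal u" and tu: "has_type [] u B1"
        by (auto simp: sem_def)
      from reds_App_dec[OF ru refl] show ?thesis
      proof (elim disjE exE conjE)
        fix t' s' assume rt: "reds t t'" and rs: "reds (Cst A1) s'" and u: "u = App t' s'"
        have s': "s' = Cst A1" using reds_Cst[OF rs] .
        have nt: "normal t'" using nu u normal_App1 by simp
        from tu u s' obtain A' where "has_type [] t' (Imp A' B1)" "has_type [] (Cst A1) A'"
          by (auto elim: tApp)
        then have "has_type [] t' (Imp A1 B1)" by (auto elim: tCst)
        then show ?thesis using ct rt nt Imp by (auto simp: sem_def)
      next
        fix m s' assume rt: "reds t (Lam m)" and rs: "reds (Cst A1) s'" and ru': "reds (substV 0 s' m) u"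
        have s': "s' = Cst A1" using reds_Cst[OF rs] .
        obtain m' where rm: "reds m m'" and u: "u = substV 0 (Cst A1) m'"
          using reds_substC_back[of 0 A1 m u] ru' s' by auto
        have nm: "normal m'" using nu u normal_substC by simp
        have "has_type (take 0 [] @ A1 # drop 0 []) m' B1"
          using has_type_desubst[of "[]" 0 A1 m' B1] tu u by simp
        then have "has_type [] (Lam m') (Imp A1 B1)" by (simp add: has_type.ty_lam)
        moreover have "reds t (Lam m')" using rt reds_Lam[OF rm] by (meson rtranclp_trans)
        ultimately show ?thesis using ct nm normal_Lam Imp by (auto simp: sem_def)
      qed
    qed
    show ?thesis using P1 P2 by blast
  next
    case (All A1)
    have szY: "\<And>Y. size (substF 0 Y A1) < size A" using All by simp
    have P1: "apps (Cst D) Ts \<in> star A"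
      if ok: "\<forall>T \<in> set Ts. case T of Inl t \<Rightarrow> closed t | Inr Y \<Rightarrow> True"
        and h: "apps (Cst D) Ts \<in> sem A" for D Ts
    proof -
      from h All obtain n where cl: "closed (apps (Cst D) Ts)" and r: "reds (apps (Cst D) Ts) n"
        and nn: "normal n" and ty: "has_type [] n (All A1)" by (auto simp: sem_def)
      have hn: "hd_c n" using hd_c_reds[OF r hd_c_apps[OF hd_c.hc_cst]] .
      have "TApp (apps (Cst D) Ts) Y \<in> star (substF 0 Y A1)" for Y
      proof -
        have "apps (Cst D) (Ts @ [Inr Y]) \<in> sem (substF 0 Y A1)"
          unfolding apps_snoc2 sem_def
        proof (intro CollectI conjI exI)
          show "closed (TApp (apps (Cst D) Ts) Y)" using cl by (simp add: closed_def)
          show "reds (TApp (apps (Cst D) Ts) Y) (TApp n Y)" using reds_TApp[OF r] .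
          show "normal (TApp n Y)" using normal_TApp_hd[OF hn nn] .
          show "has_type [] (TApp n Y) (substF 0 Y A1)" using ty by (rule has_type.ty_tapp)
        qed
        moreover have "\<forall>T \<in> set (Ts @ [Inr Y]). case T of Inl t \<Rightarrow> closed t | Inr Y \<Rightarrow> True"
          using ok by auto
        ultimately have "apps (Cst D) (Ts @ [Inr Y]) \<in> star (substF 0 Y A1)"
          using IH1[OF szY] by simp
        then show ?thesis by (simp add: apps_snoc2)
      qed
      then show ?thesis using cl All by simp
    qed
    have P2: "t \<in> sem A" if t: "t \<in> star A" for t
    proof -
      from t All have ct: "closed t" and ht: "\<forall>Y. TApp t Y \<in> star (substF 0 Y A1)" by auto
      define Y where "Y = max (bT t) (bF A1)"
      have fY: "\<not> freeT t Y" using bT_free[of t Y] unfolding Y_def by auto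
      have fA: "\<not> freeF A1 (Suc Y)" using bF_free[of A1 "Suc Y"] unfolding Y_def by auto
      have "TApp t Y \<in> sem (substF 0 Y A1)" using IH2[OF szY] ht by blast
      then obtain u where ru: "reds (TApp t Y) u" and nu: "normal u"
        and tu: "has_type [] u (substF 0 Y A1)" by (auto simp: sem_def)
      let ?tau = "\<lambda>i. if i = Y then 0 else Suc i"
      from reds_TApp_dec[OF ru refl] show ?thesis
      proof (elim disjE exE conjE)
        fix t' assume rt: "reds t t'" and u: "u = TApp t' Y"
        have nt: "normal t'" using nu u normal_TApp1 by simp
        from tu u obtain A' where ta: "has_type [] t' (All A')" and eq: "substF 0 Y A1 = substF 0 Y A'"
          by (auto elim: tTApp)
        have "\<forall>m. t' \<noteq> Lam m" using ta by (auto elim: tLam)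
        moreover have "\<forall>m. t' \<noteq> TLam m" using nu u unfolding normal_def by (auto intro: beta.b_tlam)
        ultimately have "hd_c t'" using neutral[OF ta nt] by blast
        then have "\<not> freeF A' (Suc Y)"
          using hd_c_free[OF _ ta, of Y] freeT_reds[OF rt] fY by auto
        then have "A' = A1" using unsubstF[OF fA] eq by (metis unsubstF)
        then show ?thesis using ct rt nt ta All by (auto simp: sem_def)
      next
        fix m assume rt: "reds t (TLam m)" and ru': "reds (substT 0 Y m) u"
        obtain m' where rm: "reds m m'" and u: "u = renT (sk 0 Y) m'"
          using reds_renT_back[of "sk 0 Y" m u] ru' by (auto simp: substT_ren)
        have nm: "normal m'" using nu u normal_renT by simp
        have fm: "\<not> freeT m' (Suc Y)"
          using freeT_reds[OF rm] freeT_reds[OF rt] fY by fastforce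
        have "has_type (map (renF ?tau) []) (renT ?tau (substT 0 Y m')) (renF ?tau (substF 0 Y A1))"
          using has_type_ren[of "[]" u "substF 0 Y A1" ?tau] tu u by (simp add: substT_ren)
        then have "has_type [] m' A1" using unsubstF[OF fA] unsubstT[OF fm] by simp
        then have "has_type [] (TLam m') (All A1)" using has_type.ty_tlam[of "[]"] by simp
        moreover have "reds t (TLam m')" using rt reds_TLam[OF rm] by (meson rtranclp_trans)
        ultimately show ?thesis using ct nm normal_TLam All by (auto simp: sem_def)
      qed
    qed
    show ?thesis using P1 P2 by blast
  qed
qed

end
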